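(* Let $r\in(0,1]$ be small enough that $\bigcup_{v\in V_r}\Theta^{\rm out}_r(v)\subset\Lambda_r$. Then on the event $\mathcal A_{r,1}$, for every $x\in\Theta^{\rm in}_r(0)\cap\mathcal O$, $$\#W_r(x)\ge r^{-d\{(d-1)/4-2\epsilon\}}.$$
   Context: Frog model setting: $d\ge2$, $r\in(0,1]$, $\omega$ i.i.d. Bernoulli($r$) on $\mathbb{Z}^d$, independent simple random walks $(S^x_k)_{k\ge0}$ with $S^x_0=x$, independent of $\omega$; $\mathcal O:=\{x:\omega(x)=1\}$. $\tau(x,y):=\inf\{k\ge0:S^x_k=y\}$ if $\omega(x)=1$, $:=\infty$ otherwise. For $A\subset\mathbb{Z}^d$, $T_A(x,y):=\inf\{\sum_{i=0}^{m-1}\tau(x_i,x_{i+1}): m\in\mathbb{N},\ x_0,\dots,x_{m-1}\in A,\ x_m\in\mathbb{Z}^d,\ x_0=x,\ x_m=y\}$. Fix $\epsilon:=1/(12d)$. $B_\infty(z,R):=\{y\in\mathbb{R}^d:\|y-z\|_\infty\le R\}$. For $v\in\mathbb{Z}^d$, with $c_r:=7\lceil r^{-(1/2+\epsilon)}\rceil$: $\Theta^{\rm in}_r(v):=B_\infty(c_rv,r^{-(1/2+\epsilon)})\cap\mathbb{Z}^d$, $\Theta_r(v):=B_\infty(c_rv,2r^{-(1/2+\epsilon)})\cap\mathbb{Z}^d$, $\Theta^{\rm out}_r(v):=(B_\infty(c_rv,3r^{-(1/2+\epsilon)})\cap\mathbb{Z}^d)\setminus\Theta_r(v)$. $u\overset{*}{\sim}v$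 means $\|u-v\|_\infty=1$. $\mathcal S_r(v)$ is the event that $\Theta^{\rm in}_r(v)\cap\mathcal O\neq\emptyset$ and for every $x\in\Theta^{\rm in}_r(v)\cap\mathcal O$: (i) for every $u\overset{*}{\sim}v$ there is $a\in\Theta^{\rm in}_r(u)\cap\mathcal O$ with $T_{\Theta_r(v)}(x,a)\le r^{-(1+3\epsilon)}$; (ii) there is $b\in\Theta^{\rm out}_r(v)\cap\mathcal O$ with $T_{\Theta_r(v)}(x,b)\le r^{-(1+3\epsilon)}$. $\Lambda_r:=B_\infty(0,r^{-(d+1)/4})\cap\mathbb{Z}^d$, $V_r:=B_\infty(0,r^{-(d-1)/4+2\epsilon})\cap\mathbb{Z}^d$, $\mathcal A_{r,1}:=\bigcap_{v\in V_r}\mathcal S_r(v)$. For $x\in\Theta^{\rm in}_r(0)$, $W_r(x):=\{w\in\bigcup_{v\in V_r}\Theta^{\rm out}_r(v): T_{\bigcup_{v\in V_r}\Theta_r(v)}(x,w)\le2r^{-(d+1)/2}\}\cap\mathcal O$. *)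

theory Defs
  imports "HOL-Analysis.Analysis" "HOL-Library.Extended_Nat"
begin

type_synonym 'd pt = "int ^ 'd"

definition frog_eps :: "'d::finite itself \<Rightarrow> real" where
  "frog_eps _ = 1 / (12 * real CARD('d))"

definition occ :: "('d::finite pt \<Rightarrow> bool) \<Rightarrow> 'd pt set" where
  "occ \<omega> = {x. \<omega> x}"

definition tau :: "('d::finite pt \<Rightarrow> bool) \<Rightarrow> ('d pt \<Rightarrow> nat \<Rightarrow> 'd pt) \<Rightarrow> 'd pt \<Rightarrow> 'd pt \<Rightarrow> enat" where
  "tau \<omega> S x y = (if \<omega> x \<and> (\<exists>k. S x k = y) then enat (LEAST k. S x k = y) else \<infinity>)"

definition passage :: "('d::finite pt \<Rightarrow> bool) \<Rightarrow> ('d pt \<Rightarrow> nat \<Rightarrow> 'd pt) \<Rightarrow> 'd pt set \<Rightarrow> 'd pt \<Rightarrow> 'd pt \<Rightarrow> enat" where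
  "passage \<omega> S A x y = Inf {(\<Sum>i<m. tau \<omega> S (p i) (p (Suc i))) | m p.
      m \<ge> 1 \<and> p 0 = x \<and> p m = y \<and> (\<forall>i<m. p i \<in> A)}"

definition enat_le_real :: "enat \<Rightarrow> real \<Rightarrow> bool" where
  "enat_le_real t c \<longleftrightarrow> (\<exists>n. t = enat n \<and> real n \<le> c)"

definition boxZ :: "real \<Rightarrow> 'd::finite pt \<Rightarrow> real \<Rightarrow> 'd pt set" where
  "boxZ c v R = {y. \<forall>i. \<bar>real_of_int (y $ i) - c * real_of_int (v $ i)\<bar> \<le> R}"

definition scale_r :: "'d::finite itself \<Rightarrow> real \<Rightarrow> real" where
  "scale_r t r = r powr (-(1/2 + frog_eps t))"

definition c_r :: "'d::finite itself \<Rightarrow> real \<Rightarrow> real" where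
  "c_r t r = 7 * real_of_int \<lceil>scale_r t r\<rceil>"

definition Theta_in :: "real \<Rightarrow> 'd::finite pt \<Rightarrow> 'd pt set" where
  "Theta_in r v = boxZ (c_r TYPE('d) r) v (scale_r TYPE('d) r)"

definition Theta :: "real \<Rightarrow> 'd::finite pt \<Rightarrow> 'd pt set" where
  "Theta r v = boxZ (c_r TYPE('d) r) v (2 * scale_r TYPE('d) r)"

definition Theta_out :: "real \<Rightarrow> 'd::finite pt \<Rightarrow> 'd pt set" where
  "Theta_out r v = boxZ (c_r TYPE('d) r) v (3 * scale_r TYPE('d) r) - Theta r v"

definition star_adj :: "'d::finite pt \<Rightarrow> 'd pt \<Rightarrow> bool" where
  "star_adj u v \<longleftrightarrow> (\<forall>i. \<bar>u $ i - v $ i\<bar> \<le> 1) \<and> (\<exists>i. \<bar>u $ i - v $ i\<bar> = 1)"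

definition good_box :: "('d::finite pt \<Rightarrow> bool) \<Rightarrow> ('d pt \<Rightarrow> nat \<Rightarrow> 'd pt) \<Rightarrow> real \<Rightarrow> 'd pt \<Rightarrow> bool" where
  "good_box \<omega> S r v \<longleftrightarrow>
     Theta_in r v \<inter> occ \<omega> \<noteq> {} \<and>
     (\<forall>x \<in> Theta_in r v \<inter> occ \<omega>.
        (\<forall>u. star_adj u v \<longrightarrow>
           (\<exists>a \<in> Theta_in r u \<inter> occ \<omega>.
              enat_le_real (passage \<omega> S (Theta r v) x a) (r powr (-(1 + 3 * frog_eps TYPE('d)))))) \<and>
        (\<exists>b \<in> Theta_out r v \<inter> occ \<omega>.
           enat_le_real (passage \<omega> S (Theta r v) x b) (r powr (-(1 + 3 * frog_eps TYPE('d))))))"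

definition Lambda_r :: "real \<Rightarrow> 'd::finite pt set" where
  "Lambda_r r = boxZ 0 0 (r powr (-(real CARD('d) + 1) / 4))"

definition V_r :: "real \<Rightarrow> 'd::finite pt set" where
  "V_r r = boxZ 0 0 (r powr (-(real CARD('d) - 1) / 4 + 2 * frog_eps TYPE('d)))"

definition A_r1 :: "('d::finite pt \<Rightarrow> bool) \<Rightarrow> ('d pt \<Rightarrow> nat \<Rightarrow> 'd pt) \<Rightarrow> real \<Rightarrow> bool" where
  "A_r1 \<omega> S r \<longleftrightarrow> (\<forall>v \<in> V_r r. good_box \<omega> S r v)"

definition W_r :: "('d::finite pt \<Rightarrow> bool) \<Rightarrow> ('d pt \<Rightarrow> nat \<Rightarrow> 'd pt) \<Rightarrow> real \<Rightarrow> 'd pt \<Rightarrow> 'd pt set" where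
  "W_r \<omega> S r x =
     {w \<in> (\<Union>v \<in> V_r r. Theta_out r v).
        enat_le_real (passage \<omega> S (\<Union>v \<in> V_r r. Theta r v) x w) (2 * r powr (-(real CARD('d) + 1) / 2))}
     \<inter> occ \<omega>"

text \<open>Sample paths of simple random walks: start at x, nearest-neighbour steps.\<close>
definition srw_paths :: "('d::finite pt \<Rightarrow> nat \<Rightarrow> 'd pt) \<Rightarrow> bool" where
  "srw_paths S \<longleftrightarrow> (\<forall>x. S x 0 = x) \<and>
     (\<forall>x k. (\<Sum>i\<in>UNIV. \<bar>S x (Suc k) $ i - S x k $ i\<bar>) = 1)"

end

theory Submission imports Defs begin
definition reach :: "('d::finite pt \<Rightarrow> bool) \<Rightarrow> ('d pt \<Rightarrow> nat \<Rightarrow> 'd pt) \<Rightarrow> 'd pt set \<Rightarrow> 'd pt \<Rightarrow> 'd pt \<Rightarrow> nat \<Rightarrow> bool" where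
  "reach \<omega> S A x y n \<longleftrightarrow> (\<exists>m p. m \<ge> 1 \<and> p 0 = x \<and> p m = y \<and> (\<forall>i<m. p i \<in> A) \<and>
      (\<Sum>i<m. tau \<omega> S (p i) (p (Suc i))) = enat n)"

lemma reach_of_le:
  assumes "enat_le_real (passage \<omega> S A x y) c"
  shows "\<exists>n. reach \<omega> S A x y n \<and> real n \<le> c"
proof -
  let ?P = "{(\<Sum>i<m. tau \<omega> S (p i) (p (Suc i))) | m p.
      m \<ge> 1 \<and> p 0 = x \<and> p m = y \<and> (\<forall>i<m. p i \<in> A)}"
  obtain n where n: "passage \<omega> S A x y = enat n" "real n \<le> c"
    using assms unfolding enat_le_real_def by blast
  have ne: "?P \<noteq> {}"
  proof
    assume "?P = {}"
    then have "passage \<omega> S A x y = \<infinity>" unfolding passage_def Inf_enat_def by simp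
    with n show False by simp
  qed
  have e1: "Inf ?P = (LEAST t. t \<in> ?P)" using ne by (simp only: Inf_enat_def if_False)
  have "(LEAST t. t \<in> ?P) \<in> ?P" by (rule LeastI_ex) (use ne in blast)
  then have "Inf ?P \<in> ?P" using e1 by simp
  then have "enat n \<in> ?P" using n(1) unfolding passage_def by simp
  then have "\<exists>m p. enat n = (\<Sum>i<m. tau \<omega> S (p i) (p (Suc i))) \<and> m \<ge> 1 \<and> p 0 = x \<and> p m = y \<and> (\<forall>i<m. p i \<in> A)"
    by (simp only: mem_Collect_eq)
  then obtain m p where "m \<ge> 1 \<and> p 0 = x \<and> p m = y \<and> (\<forall>i<m. p i \<in> A) \<and>
      (\<Sum>i<m. tau \<omega> S (p i) (p (Suc i))) = enat n" by metis
  then show ?thesis using n(2) unfolding reach_def by blast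
qed

lemma le_of_reach:
  assumes "reach \<omega> S A x y n" "real n \<le> c"
  shows "enat_le_real (passage \<omega> S A x y) c"
proof -
  have "enat n \<in> {(\<Sum>i<m. tau \<omega> S (p i) (p (Suc i))) | m p.
      m \<ge> 1 \<and> p 0 = x \<and> p m = y \<and> (\<forall>i<m. p i \<in> A)}"
    using assms(1) unfolding reach_def by force
  then have le: "passage \<omega> S A x y \<le> enat n" unfolding passage_def by (rule Inf_lower)
  then obtain n' where "passage \<omega> S A x y = enat n'" "n' \<le> n"
    by (cases "passage \<omega> S A x y") auto
  then show ?thesis using assms(2) unfolding enat_le_real_def by auto
qed

lemma reach_mono: "reach \<omega> S A x y n \<Longrightarrow> A \<subseteq> B \<Longrightarrow> reach \<omega> S B x y n"
  unfolding reach_def by blast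

lemma sum_split_add: "(\<Sum>i<a + b. f i) = (\<Sum>i<a. f i) + (\<Sum>j<b. f (a + j))"
  for f :: "nat \<Rightarrow> 'a::comm_monoid_add"
  by (induction b) (auto simp: add.assoc)

lemma reach_trans:
  assumes "reach \<omega> S A x y n1" "reach \<omega> S B y z n2"
  shows "reach \<omega> S (A \<union> B) x z (n1 + n2)"
proof -
  obtain m1 p1 where h1: "m1 \<ge> 1" "p1 0 = x" "p1 m1 = y" "\<forall>i<m1. p1 i \<in> A"
    "(\<Sum>i<m1. tau \<omega> S (p1 i) (p1 (Suc i))) = enat n1"
    using assms(1) unfolding reach_def by blast
  obtain m2 p2 where h2: "m2 \<ge> 1" "p2 0 = y" "p2 m2 = z" "\<forall>i<m2. p2 i \<in> B"
    "(\<Sum>i<m2. tau \<omega> S (p2 i) (p2 (Suc i))) = enat n2"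
    using assms(2) unfolding reach_def by blast
  define p where "p = (\<lambda>i. if i \<le> m1 then p1 i else p2 (i - m1))"
  have pa: "p (m1 + j) = p2 j" for j using h1(3) h2(2) by (cases j) (auto simp: p_def)
  have s1: "(\<Sum>i<m1. tau \<omega> S (p i) (p (Suc i))) = enat n1"
    using h1(5) by (auto simp: p_def intro!: sum.cong)
  have s2: "(\<Sum>j<m2. tau \<omega> S (p (m1 + j)) (p (Suc (m1 + j)))) = enat n2"
  proof -
    have pa': "p (Suc (m1 + j)) = p2 (Suc j)" for j using pa[of "Suc j"] by simp
    show ?thesis using h2(5) by (simp only: pa pa')
  qed
  have "(\<Sum>i<m1 + m2. tau \<omega> S (p i) (p (Suc i))) = enat (n1 + n2)"
    using sum_split_add[of "\<lambda>i. tau \<omega> S (p i) (p (Suc i))" m1 m2] s1 s2 by simp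
  moreover have "p 0 = x" using h1 by (simp add: p_def)
  moreover have "p (m1 + m2) = z" using pa h2 by simp
  moreover have "\<forall>i<m1 + m2. p i \<in> A \<union> B"
  proof (intro allI impI)
    fix i assume i: "i < m1 + m2"
    show "p i \<in> A \<union> B"
    proof (cases "i < m1")
      case True then show ?thesis using h1 by (simp add: p_def)
    next
      case False
      then obtain j where "i = m1 + j" "j < m2" using i by (metis add_less_cancel_left le_add_diff_inverse not_less)
      then show ?thesis using pa h2 by simp
    qed
  qed
  moreover have "m1 + m2 \<ge> 1" using h1(1) by simp
  ultimately show ?thesis unfolding reach_def by (intro exI[of _ "m1 + m2"] exI[of _ p]) simp
qed

lemma reach_refl:
  assumes "srw_paths S" "\<omega> x" "x \<in> A"
  shows "reach \<omega> S A x x 0"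
proof -
  have "S x 0 = x" using assms(1) unfolding srw_paths_def by blast
  then have "tau \<omega> S x x = enat 0" using assms(2) unfolding tau_def by auto
  then show ?thesis unfolding reach_def using assms(3)
    by (intro exI[of _ 1] exI[of _ "\<lambda>_. x"]) auto
qed

lemma finite_vecset:
  assumes "\<And>i. finite (B i)"
  shows "finite {y :: 'a ^ 'n::finite. \<forall>i. y $ i \<in> B i}"
proof -
  have "{y :: 'a ^ 'n. \<forall>i. y $ i \<in> B i} \<subseteq> vec_lambda ` (Pi\<^sub>E UNIV B)"
  proof
    fix y :: "'a ^ 'n" assume "y \<in> {y. \<forall>i. y $ i \<in> B i}"
    then have "(\<lambda>i. y $ i) \<in> Pi\<^sub>E UNIV B" by auto
    then show "y \<in> vec_lambda ` (Pi\<^sub>E UNIV B)" by (metis image_eqI vec_lambda_eta)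
  qed
  moreover have "finite (Pi\<^sub>E UNIV B)" using assms by (simp add: finite_PiE)
  ultimately show ?thesis by (meson finite_imageI finite_subset)
qed

lemma card_vecset:
  "card {y :: 'a ^ 'n::finite. \<forall>i. y $ i \<in> B} = card B ^ CARD('n)"
proof -
  have "bij_betw vec_lambda (Pi\<^sub>E UNIV (\<lambda>_. B)) {y :: 'a ^ 'n. \<forall>i. y $ i \<in> B}"
    unfolding bij_betw_def
  proof
    show "inj_on vec_lambda (Pi\<^sub>E UNIV (\<lambda>_. B))"
      by (auto simp: inj_on_def vec_lambda_inject)
    show "vec_lambda ` (Pi\<^sub>E UNIV (\<lambda>_. B)) = {y :: 'a ^ 'n. \<forall>i. y $ i \<in> B}"
    proof
      show "vec_lambda ` (Pi\<^sub>E UNIV (\<lambda>_. B)) \<subseteq> {y :: 'a ^ 'n. \<forall>i. y $ i \<in> B}" by auto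
      show "{y :: 'a ^ 'n. \<forall>i. y $ i \<in> B} \<subseteq> vec_lambda ` (Pi\<^sub>E UNIV (\<lambda>_. B))"
      proof
        fix y :: "'a ^ 'n" assume "y \<in> {y. \<forall>i. y $ i \<in> B}"
        then have "(\<lambda>i. y $ i) \<in> Pi\<^sub>E UNIV (\<lambda>_. B)" by auto
        then show "y \<in> vec_lambda ` (Pi\<^sub>E UNIV (\<lambda>_. B))" by (metis image_eqI vec_lambda_eta)
      qed
    qed
  qed
  then have "card {y :: 'a ^ 'n. \<forall>i. y $ i \<in> B} = card (Pi\<^sub>E (UNIV::'n set) (\<lambda>_. B))"
    by (simp add: bij_betw_same_card)
  also have "\<dots> = card B ^ CARD('n)" by (simp add: card_PiE)
  finally show ?thesis .
qed

lemma finite_boxZ: "finite (boxZ c v R)"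
proof -
  have "boxZ c v R \<subseteq> {y. \<forall>i. y $ i \<in> {\<lfloor>c * real_of_int (v $ i) - R\<rfloor>..\<lceil>c * real_of_int (v $ i) + R\<rceil>}}"
    unfolding boxZ_def
  proof (safe)
    fix y :: "'a pt" and i assume "\<forall>i. \<bar>real_of_int (y $ i) - c * real_of_int (v $ i)\<bar> \<le> R"
    then have "\<bar>real_of_int (y $ i) - c * real_of_int (v $ i)\<bar> \<le> R" by blast
    then show "y $ i \<in> {\<lfloor>c * real_of_int (v $ i) - R\<rfloor>..\<lceil>c * real_of_int (v $ i) + R\<rceil>}"
      by (auto simp: abs_le_iff floor_le_iff le_ceiling_iff)
  qed
  moreover have "finite {y :: 'a pt. \<forall>i. y $ i \<in> {\<lfloor>c * real_of_int (v $ i) - R\<rfloor>..\<lceil>c * real_of_int (v $ i) + R\<rceil>}}"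
    by (rule finite_vecset) simp
  ultimately show ?thesis by (rule finite_subset)
qed

theorem lemma3p7:
  fixes \<omega> :: "'d::finite pt \<Rightarrow> bool" and S :: "'d pt \<Rightarrow> nat \<Rightarrow> 'd pt" and r :: real
  assumes "CARD('d) \<ge> 2"
    and "0 < r" and "r \<le> 1"
    and "(\<Union>v \<in> (V_r r :: 'd pt set). Theta_out r v) \<subseteq> Lambda_r r"
    and "srw_paths S"
    and "A_r1 \<omega> S r"
    and "x \<in> Theta_in r 0 \<inter> occ \<omega>"
  shows "real (card (W_r \<omega> S r x)) \<ge>
           r powr (-(real CARD('d) * ((real CARD('d) - 1) / 4 - 2 * frog_eps TYPE('d))))"
proof -
  define d where "d = real CARD('d)"
  define \<epsilon> where "\<epsilon> = frog_eps TYPE('d)"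
  define s where "s = scale_r TYPE('d) r"
  define R where "R = r powr (-(real CARD('d) - 1) / 4 + 2 * frog_eps TYPE('d))"
  define C where "C = r powr (-(1 + 3 * frog_eps TYPE('d)))"
  define K where "K = nat \<lfloor>R\<rfloor>"
  define V where "V = (V_r r :: 'd pt set)"
  define U where "U = (\<Union>v \<in> V. Theta r v)"
  have d2: "d \<ge> 2" using assms(1) d_def by simp
  have epsd: "\<epsilon> = 1 / (12 * d)" unfolding \<epsilon>_def d_def frog_eps_def by simp
  have eps0: "0 < \<epsilon>" "\<epsilon> \<le> 1/24" using d2 unfolding epsd by (auto simp: field_simps)
  have spos: "s > 0" unfolding s_def scale_r_def using assms(2) by simp
  have Cpos: "C \<ge> 0" unfolding C_def by simp
  have R1: "R \<ge> 1"
  proof -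
    have "-(real CARD('d) - 1) / 4 + 2 * frog_eps TYPE('d) \<le> 0"
      using d2 eps0 unfolding d_def \<epsilon>_def by (auto simp: field_simps)
    then have "r powr (-(real CARD('d) - 1) / 4 + 2 * frog_eps TYPE('d)) \<ge> r powr 0"
      using assms(2,3) by (intro powr_mono') auto
    then show ?thesis unfolding R_def using assms(2) by simp
  qed
  have Kfl: "int K = \<lfloor>R\<rfloor>" unfolding K_def using R1 by simp
  have pt: "(\<bar>real_of_int z\<bar> \<le> R) = (z \<in> {- int K..int K})" for z :: int
  proof -
    have "(\<bar>real_of_int z\<bar> \<le> R) = (real_of_int \<bar>z\<bar> \<le> R)" by simp
    also have "\<dots> = (\<bar>z\<bar> \<le> \<lfloor>R\<rfloor>)" by (rule le_floor_iff[symmetric])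
    also have "\<dots> = (z \<in> {- int K..int K})" unfolding Kfl by auto
    finally show ?thesis .
  qed
  have V_eq: "V = {y. \<forall>i. y $ i \<in> {- int K..int K}}"
    unfolding V_def V_r_def boxZ_def R_def[symmetric] using pt by simp
  have zeroV: "0 \<in> V" unfolding V_eq by simp
  have x_in: "x \<in> Theta_in r 0" "\<omega> x" using assms(7) by (auto simp: occ_def)
  have xU: "x \<in> U"
  proof -
    have h: "\<forall>i. \<bar>real_of_int (x $ i) - c_r TYPE('d) r * real_of_int ((0::'d pt) $ i)\<bar> \<le> s"
      using x_in(1) unfolding Theta_in_def boxZ_def s_def by blast
    have "\<forall>i. \<bar>real_of_int (x $ i) - c_r TYPE('d) r * real_of_int ((0::'d pt) $ i)\<bar> \<le> 2 * s"
    proof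
      fix i show "\<bar>real_of_int (x $ i) - c_r TYPE('d) r * real_of_int ((0::'d pt) $ i)\<bar> \<le> 2 * s"
        using h[rule_format, of i] spos by linarith
    qed
    then have "x \<in> Theta r 0" unfolding Theta_def boxZ_def s_def by blast
    then show ?thesis unfolding U_def using zeroV by blast
  qed
  have good: "good_box \<omega> S r v" if "v \<in> V" for v
    using assms(6) that unfolding A_r1_def V_def by blast
  have base: "reach \<omega> S U x x 0" by (rule reach_refl[of S \<omega> x U, OF assms(5) x_in(2) xU])
  have claim: "\<forall>v. (\<forall>i. \<bar>v $ i\<bar> \<le> int N) \<longrightarrow> v \<in> V \<longrightarrow>
      (\<exists>a \<in> Theta_in r v \<inter> occ \<omega>. \<exists>n. reach \<omega> S U x a n \<and> real n \<le> real N * C)" for N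
  proof (induction N)
    case 0
    show ?case
    proof (intro allI impI)
      fix v :: "'d pt" assume "\<forall>i. \<bar>v $ i\<bar> \<le> int 0"
      then have "v = 0" by (simp add: vec_eq_iff)
      then show "\<exists>a \<in> Theta_in r v \<inter> occ \<omega>. \<exists>n. reach \<omega> S U x a n \<and> real n \<le> real 0 * C"
        using base assms(7) by auto
    qed
  next
    case (Suc N)
    show ?case
    proof (intro allI impI)
      fix v :: "'d pt" assume vb: "\<forall>i. \<bar>v $ i\<bar> \<le> int (Suc N)" and vV: "v \<in> V"
      show "\<exists>a \<in> Theta_in r v \<inter> occ \<omega>. \<exists>n. reach \<omega> S U x a n \<and> real n \<le> real (Suc N) * C"
      proof (cases "v = 0")
        case True
        have "real 0 \<le> real (Suc N) * C" using Cpos by simp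
        then show ?thesis using base assms(7) True by blast
      next
        case False
        then obtain j where j: "v $ j \<noteq> 0" by (auto simp: vec_eq_iff)
        define u where "u = (\<chi> i. v $ i - sgn (v $ i))"
        have ub: "\<forall>i. \<bar>u $ i\<bar> \<le> int N"
        proof
          fix i show "\<bar>u $ i\<bar> \<le> int N" using vb[rule_format, of i]
            by (cases "v $ i > 0"; cases "v $ i < 0") (auto simp: u_def)
        qed
        have ule: "\<bar>u $ i\<bar> \<le> \<bar>v $ i\<bar>" for i
          by (cases "v $ i > 0"; cases "v $ i < 0") (auto simp: u_def)
        have vK: "\<bar>v $ i\<bar> \<le> int K" for i
        proof -
          have "v $ i \<in> {- int K..int K}" using vV unfolding V_eq by blast
          then show ?thesis by (auto simp: abs_le_iff)
        qed
        have "u $ i \<in> {- int K..int K}" for i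
        proof -
          have "\<bar>u $ i\<bar> \<le> int K" using ule[of i] vK[of i] by linarith
          then show ?thesis by (auto simp: abs_le_iff)
        qed
        then have uV: "u \<in> V" unfolding V_eq by blast
        obtain a n1 where a: "a \<in> Theta_in r u \<inter> occ \<omega>" "reach \<omega> S U x a n1" "real n1 \<le> real N * C"
          using Suc.IH ub uV by blast
        have adj: "star_adj v u"
          unfolding star_adj_def
        proof
          show "\<forall>i. \<bar>v $ i - u $ i\<bar> \<le> 1" by (auto simp: u_def abs_sgn_eq)
          show "\<exists>i. \<bar>v $ i - u $ i\<bar> = 1" using j by (auto simp: u_def abs_sgn_eq)
        qed
        obtain a' where a': "a' \<in> Theta_in r v \<inter> occ \<omega>"
          "enat_le_real (passage \<omega> S (Theta r u) a a') C"
          using good[OF uV] a(1) adj unfolding good_box_def C_def by blast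
        obtain n2 where n2: "reach \<omega> S (Theta r u) a a' n2" "real n2 \<le> C"
          using reach_of_le[OF a'(2)] by blast
        have "reach \<omega> S (U \<union> Theta r u) x a' (n1 + n2)" by (rule reach_trans[OF a(2) n2(1)])
        moreover have "U \<union> Theta r u = U" unfolding U_def using uV by blast
        ultimately have "reach \<omega> S U x a' (n1 + n2)" by simp
        moreover have "real (n1 + n2) \<le> real (Suc N) * C" using a(3) n2(2) by (simp add: algebra_simps)
        ultimately show ?thesis using a'(1) by blast
      qed
    qed
  qed
  have Rpow: "R * C \<le> r powr (-(real CARD('d) + 1) / 2)"
  proof -
    have "R * C = r powr ((-(real CARD('d) - 1) / 4 + 2 * frog_eps TYPE('d)) + (-(1 + 3 * frog_eps TYPE('d))))"
      unfolding R_def C_def by (rule powr_add[symmetric])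
    also have "\<dots> \<le> r powr (-(real CARD('d) + 1) / 2)"
      using assms(2,3) d2 eps0 unfolding d_def \<epsilon>_def by (intro powr_mono') (auto simp: field_simps)
    finally show ?thesis .
  qed
  have KR: "real K \<le> R" unfolding K_def using R1 by simp
  have time: "(real K + 1) * C \<le> 2 * r powr (-(real CARD('d) + 1) / 2)"
  proof -
    have "(real K + 1) * C \<le> (2 * R) * C" using KR R1 Cpos by (intro mult_right_mono) auto
    then show ?thesis using Rpow by simp
  qed
  have ex_b: "\<exists>b. b \<in> Theta_out r v \<and> b \<in> W_r \<omega> S r x" if vV: "v \<in> V" for v
  proof -
    have vb: "\<forall>i. \<bar>v $ i\<bar> \<le> int K"
    proof
      fix i
      have "v $ i \<in> {- int K..int K}" using vV unfolding V_eq by blast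
      then show "\<bar>v $ i\<bar> \<le> int K" by (auto simp: abs_le_iff)
    qed
    obtain a n1 where a: "a \<in> Theta_in r v \<inter> occ \<omega>" "reach \<omega> S U x a n1" "real n1 \<le> real K * C"
      using claim[of K] vb vV by blast
    obtain b where b: "b \<in> Theta_out r v \<inter> occ \<omega>"
      "enat_le_real (passage \<omega> S (Theta r v) a b) C"
      using good[OF vV] a(1) unfolding good_box_def C_def by blast
    obtain n3 where n3: "reach \<omega> S (Theta r v) a b n3" "real n3 \<le> C"
      using reach_of_le[OF b(2)] by blast
    have "reach \<omega> S (U \<union> Theta r v) x b (n1 + n3)" by (rule reach_trans[OF a(2) n3(1)])
    moreover have "U \<union> Theta r v = U" unfolding U_def using vV by blast
    ultimately have rb: "reach \<omega> S U x b (n1 + n3)" by simp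
    have "real (n1 + n3) \<le> (real K + 1) * C" using a(3) n3(2) by (simp add: algebra_simps)
    then have "real (n1 + n3) \<le> 2 * r powr (-(real CARD('d) + 1) / 2)" using time by linarith
    then have "enat_le_real (passage \<omega> S U x b) (2 * r powr (-(real CARD('d) + 1) / 2))"
      by (rule le_of_reach[OF rb])
    then show ?thesis using b(1) vV unfolding W_r_def U_def V_def by blast
  qed
  then obtain f where f: "\<And>v. v \<in> V \<Longrightarrow> f v \<in> Theta_out r v \<and> f v \<in> W_r \<omega> S r x" by metis
  have inj: "inj_on f V"
  proof (rule inj_onI)
    fix v w assume vw: "v \<in> V" "w \<in> V" "f v = f w"
    show "v = w"
    proof (rule ccontr)
      assume "v \<noteq> w"
      then obtain i where i: "v $ i \<noteq> w $ i" by (auto simp: vec_eq_iff)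
      define b where "b = f v"
      have b1: "\<bar>real_of_int (b $ i) - c_r TYPE('d) r * real_of_int (v $ i)\<bar> \<le> 3 * s"
        using f[OF vw(1)] unfolding b_def Theta_out_def boxZ_def s_def by blast
      have b2: "\<bar>real_of_int (b $ i) - c_r TYPE('d) r * real_of_int (w $ i)\<bar> \<le> 3 * s"
        using f[OF vw(2)] vw(3) unfolding b_def Theta_out_def boxZ_def s_def by auto
      have c7: "c_r TYPE('d) r \<ge> 7 * s" unfolding c_r_def s_def by simp
      have "1 \<le> \<bar>real_of_int (v $ i) - real_of_int (w $ i)\<bar>" using i by linarith
      then have "c_r TYPE('d) r * 1 \<le> c_r TYPE('d) r * \<bar>real_of_int (v $ i) - real_of_int (w $ i)\<bar>"
        using c7 spos by (intro mult_left_mono) auto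
      also have "\<dots> = \<bar>c_r TYPE('d) r * (real_of_int (v $ i) - real_of_int (w $ i))\<bar>"
        using c7 spos by (simp add: abs_mult)
      also have "\<dots> = \<bar>c_r TYPE('d) r * real_of_int (v $ i) - c_r TYPE('d) r * real_of_int (w $ i)\<bar>"
        by (simp only: right_diff_distrib)
      also have "\<dots> \<le> 6 * s" using b1 b2 by linarith
      finally show False using c7 spos by linarith
    qed
  qed
  have finW: "finite (W_r \<omega> S r x)"
  proof -
    have "W_r \<omega> S r x \<subseteq> (\<Union>v \<in> V. Theta_out r v)" unfolding W_r_def V_def by blast
    moreover have "finite V" unfolding V_def V_r_def by (rule finite_boxZ)
    moreover have "finite (Theta_out r v)" for v unfolding Theta_out_def by (simp add: finite_boxZ)
    ultimately show ?thesis by (meson finite_UN_I finite_subset)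
  qed
  have "card V \<le> card (W_r \<omega> S r x)"
    using card_inj_on_le[OF inj _ finW] f by blast
  moreover have "card V = (2 * K + 1) ^ CARD('d)"
  proof -
    have cK: "card {- int K..int K} = 2 * K + 1" by (simp add: nat_eq_iff)
    show ?thesis unfolding V_eq card_vecset cK ..
  qed
  ultimately have cardW: "real ((2 * K + 1) ^ CARD('d)) \<le> real (card (W_r \<omega> S r x))" by linarith
  have "R \<le> real (2 * K + 1)"
  proof -
    have "R < real K + 1" unfolding K_def using R1 by simp
    then show ?thesis using R1 by simp
  qed
  then have "R ^ CARD('d) \<le> real (2 * K + 1) ^ CARD('d)" using R1 by (intro power_mono) auto
  moreover have "R ^ CARD('d) = r powr (-(real CARD('d) * ((real CARD('d) - 1) / 4 - 2 * frog_eps TYPE('d))))"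
  proof -
    have "R ^ CARD('d) = R powr real CARD('d)" using R1 by (simp add: powr_realpow)
    also have "\<dots> = r powr ((-(real CARD('d) - 1) / 4 + 2 * frog_eps TYPE('d)) * real CARD('d))"
      unfolding R_def by (simp add: powr_powr)
    also have "(-(real CARD('d) - 1) / 4 + 2 * frog_eps TYPE('d)) * real CARD('d)
        = -(real CARD('d) * ((real CARD('d) - 1) / 4 - 2 * frog_eps TYPE('d)))" by (simp add: field_simps)
    finally show ?thesis .
  qed
  ultimately show ?thesis using cardW by simp
qed

end
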